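(* Let $\kappa$ be a regular uncountable cardinal, $I$ an ideal on $\kappa$, and $L=\{\lambda+1:\lambda<\kappa \text{ a limit ordinal}\}$. If $L\in I$, then the pleasant closure $P(I)$ contains $NS_\kappa$, and hence $P(I)$ is normal.
   Context: An ideal on $\kappa$ is a family of subsets of $\kappa$ closed under subsets and finite unions, which is $<\kappa$-complete and contains all singletons. $NS_\kappa$ is the ideal of nonstationary subsets of $\kappa$. For $A\subseteq\kappa$ and $X_\alpha\subseteq\kappa$, $\bigtriangledown_{\alpha\in A}X_\alpha=\{\xi<\kappa:\exists\alpha<\xi\,(\alpha\in A\wedge \xi\in X_\alpha)\}$. An ideal is normal if $X_\alpha$ in it for all $\alpha<\kappa$ implies $\bigtriangledown_{\alpha<\kappa}X_\alpha$ is in it; it is pleasant if whenever $A$ and all $X_\alpha$ are in it, so is $\bigtriangledown_{\alpha\in A}X_\alpha$. The pleasant closure $P(I)$ is the smallest pleasant ideal containing $I$ (obtained by iterating, transfinitely, the operation of adding diagonal unions $\bigtriangledown_{\alpha\in T}X_\alpha$ with $T\in I$ and the $X_\alpha$ from the previous stage, taking unions at limits). *)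

theory Defs
  imports Main "HOL-Library.Countable_Set"
begin

(* kappa is represented by a well-ordered type 'k: its elements are the ordinals < kappa. *)

definition card_less :: "'a set \<Rightarrow> 'b set \<Rightarrow> bool" where
  "card_less A B \<longleftrightarrow> \<not> (\<exists>f. inj_on f B \<and> f ` B \<subseteq> A)"

definition is_cardinal_type :: "'k::wellorder itself \<Rightarrow> bool" where
  "is_cardinal_type T \<longleftrightarrow> (\<forall>a::'k. card_less {x. x < a} (UNIV :: 'k set))"

definition regular_uncountable :: "'k::wellorder itself \<Rightarrow> bool" where
  "regular_uncountable T \<longleftrightarrow> is_cardinal_type T \<and> \<not> countable (UNIV :: 'k set) \<and>
     (\<forall>S::'k set. card_less S (UNIV :: 'k set) \<longrightarrow> (\<exists>b. \<forall>s\<in>S. s < b))"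

definition is_limit :: "'k::wellorder \<Rightarrow> bool" where
  "is_limit a \<longleftrightarrow> (\<exists>b. b < a) \<and> (\<forall>b<a. \<exists>c. b < c \<and> c < a)"

definition succ :: "'k::wellorder \<Rightarrow> 'k" where
  "succ a = (LEAST x. a < x)"

definition L_set :: "'k::wellorder set" where
  "L_set = {x. \<exists>l. is_limit l \<and> x = succ l}"

definition ideal_on :: "'k::wellorder set set \<Rightarrow> bool" where
  "ideal_on I \<longleftrightarrow>
     (\<forall>A B. A \<in> I \<and> B \<subseteq> A \<longrightarrow> B \<in> I) \<and>
     (\<forall>A B. A \<in> I \<and> B \<in> I \<longrightarrow> A \<union> B \<in> I) \<and>
     (\<forall>F. F \<subseteq> I \<and> card_less F (UNIV :: 'k set) \<longrightarrow> \<Union>F \<in> I) \<and>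
     (\<forall>x. {x} \<in> I)"

definition club :: "'k::wellorder set \<Rightarrow> bool" where
  "club C \<longleftrightarrow> (\<forall>a. \<exists>c\<in>C. a \<le> c) \<and>
     (\<forall>a. is_limit a \<and> (\<forall>b<a. \<exists>c\<in>C. b < c \<and> c < a) \<longrightarrow> a \<in> C)"

definition stationary :: "'k::wellorder set \<Rightarrow> bool" where
  "stationary S \<longleftrightarrow> (\<forall>C. club C \<longrightarrow> S \<inter> C \<noteq> {})"

definition NS :: "'k::wellorder set set" where
  "NS = {S. \<not> stationary S}"

definition diag_union :: "'k::wellorder set \<Rightarrow> ('k \<Rightarrow> 'k set) \<Rightarrow> 'k set" where
  "diag_union A X = {\<xi>. \<exists>\<alpha><\<xi>. \<alpha> \<in> A \<and> \<xi> \<in> X \<alpha>}"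

definition normal_ideal :: "'k::wellorder set set \<Rightarrow> bool" where
  "normal_ideal I \<longleftrightarrow> (\<forall>X. (\<forall>\<alpha>. X \<alpha> \<in> I) \<longrightarrow> diag_union UNIV X \<in> I)"

definition pleasant :: "'k::wellorder set set \<Rightarrow> bool" where
  "pleasant I \<longleftrightarrow> (\<forall>A X. A \<in> I \<and> (\<forall>\<alpha>. X \<alpha> \<in> I) \<longrightarrow> diag_union A X \<in> I)"

definition pleasant_closure :: "'k::wellorder set set \<Rightarrow> 'k set set" where
  "pleasant_closure I = \<Inter>{J. ideal_on J \<and> pleasant J \<and> I \<subseteq> J}"

end

theory Submission
  imports Defs
begin

lemma ideal_sub: "ideal_on J \<Longrightarrow> A \<in> J \<Longrightarrow> B \<subseteq> A \<Longrightarrow> B \<in> J"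
  unfolding ideal_on_def by blast
lemma ideal_un: "ideal_on J \<Longrightarrow> A \<in> J \<Longrightarrow> B \<in> J \<Longrightarrow> A \<union> B \<in> J"
  unfolding ideal_on_def by blast
lemma ideal_Union: "ideal_on (J::'k::wellorder set set) \<Longrightarrow> F \<subseteq> J \<Longrightarrow> card_less F (UNIV::'k set) \<Longrightarrow> \<Union>F \<in> J"
  unfolding ideal_on_def by blast

lemma card_less_image:
  assumes "card_less B U" shows "card_less (g ` B) U"
  unfolding card_less_def
proof
  assume "\<exists>f. inj_on f U \<and> f ` U \<subseteq> g ` B"
  then obtain f where f: "inj_on f U" "f ` U \<subseteq> g ` B" by blast
  let ?h = "inv_into B g \<circ> f"
  have "inj_on ?h U"
    by (rule comp_inj_on[OF f(1)]) (meson f(2) inj_on_inv_into inj_on_subset)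
  moreover have "?h ` U \<subseteq> B"
  proof
    fix y assume "y \<in> ?h ` U"
    then obtain x where "x \<in> U" "y = ?h x" by blast
    with f(2) obtain z where "z \<in> B" "f x = g z" by blast
    thus "y \<in> B" using \<open>y = ?h x\<close> by (simp add: inv_into_into)
  qed
  ultimately show False using assms unfolding card_less_def by blast
qed

lemma countable_card_less:
  assumes R: "regular_uncountable TYPE('k::wellorder)" and "countable S"
  shows "card_less S (UNIV::'k set)"
  unfolding card_less_def
proof
  assume "\<exists>f. inj_on f (UNIV::'k set) \<and> f ` UNIV \<subseteq> S"
  then obtain f where f: "inj_on f (UNIV::'k set)" "f ` UNIV \<subseteq> S" by blast
  have "countable (f ` UNIV)" using assms(2) f(2) countable_subset by blast
  hence "countable (UNIV::'k set)" using f(1) countable_image_inj_on by blast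
  thus False using R unfolding regular_uncountable_def by blast
qed

lemma countable_bounded:
  assumes R: "regular_uncountable TYPE('k::wellorder)" and "countable (S::'k set)"
  shows "\<exists>b. \<forall>s\<in>S. s < b"
  using countable_card_less[OF assms] R unfolding regular_uncountable_def by blast

lemma no_max:
  assumes R: "regular_uncountable TYPE('k::wellorder)"
  shows "\<exists>b. (a::'k) < b"
  using countable_bounded[OF R, of "{a}"] by auto

lemma succ_gt:
  assumes R: "regular_uncountable TYPE('k::wellorder)"
  shows "(a::'k) < succ a"
  unfolding succ_def using no_max[OF R, of a] by (meson LeastI)

lemma succ_le: "(a::'k::wellorder) < x \<Longrightarrow> succ a \<le> x"
  unfolding succ_def by (rule Least_le)

lemma succ_inj:
  assumes R: "regular_uncountable TYPE('k::wellorder)" and "succ (a::'k) = succ b"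
  shows "a = b"
proof (rule ccontr)
  assume "a \<noteq> b"
  then consider "a < b" | "b < a" by (meson linorder_neqE)
  thus False
  proof cases
    case 1 then have "succ a \<le> b" by (rule succ_le)
    thus False using succ_gt[OF R, of b] assms(2) by simp
  next
    case 2 then have "succ b \<le> a" by (rule succ_le)
    thus False using succ_gt[OF R, of a] assms(2) by simp
  qed
qed

lemma sup_seq:
  assumes R: "regular_uncountable TYPE('k::wellorder)"
    and inc: "\<And>n. (f::nat \<Rightarrow> 'k) n < f (Suc n)"
  shows "\<exists>u. (\<forall>n. f n < u) \<and> is_limit u \<and> (\<forall>b<u. \<exists>n. b < f n)"
proof -
  obtain b where b: "\<forall>s\<in>range f. s < b" using countable_bounded[OF R, of "range f"] by blast
  define u where "u = (LEAST x. \<forall>n. f n < x)"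
  have u1: "\<forall>n. f n < u" unfolding u_def by (rule LeastI[of _ b]) (use b in auto)
  have u2: "\<exists>n. c < f n" if "c < u" for c
  proof -
    have "\<not> (\<forall>n. f n < c)" using not_less_Least[OF that[unfolded u_def]] by blast
    then obtain n where "c \<le> f n" by (meson not_less)
    thus ?thesis using inc[of n] by (meson le_less_trans)
  qed
  have "is_limit u" unfolding is_limit_def using u1 u2 by blast
  thus ?thesis using u1 u2 by blast
qed

lemma limits_unbounded:
  assumes R: "regular_uncountable TYPE('k::wellorder)"
  shows "\<exists>u. (a::'k) < u \<and> is_limit u"
proof -
  have "\<And>n. ((succ ^^ n) a) < (succ ^^ Suc n) a" using succ_gt[OF R] by simp
  from sup_seq[where f="\<lambda>n. (succ ^^ n) a", OF R this] obtain u where "\<forall>n. (succ ^^ n) a < u" "is_limit u" by blast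
  thus ?thesis by (metis funpow_0)
qed

lemma limit_not_succ:
  assumes "is_limit (x::'k::wellorder)" "\<alpha> < x" shows "x \<noteq> succ \<alpha>"
proof
  assume e: "x = succ \<alpha>"
  obtain c where "\<alpha> < c" "c < x" using assms unfolding is_limit_def by blast
  thus False using succ_le[of \<alpha> c] e by simp
qed

lemma bounded_in:
  assumes R: "regular_uncountable TYPE('k::wellorder)" and J: "ideal_on J"
  shows "{\<xi>::'k. \<xi> < b} \<in> J"
proof -
  have "card_less {x. x < b} (UNIV::'k set)"
    using R unfolding regular_uncountable_def is_cardinal_type_def by blast
  hence cl: "card_less ((\<lambda>x. {x}) ` {x. x < b}) (UNIV::'k set)" by (rule card_less_image)
  have "(\<lambda>x. {x}) ` {x. x < b} \<subseteq> J" using J unfolding ideal_on_def by blast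
  hence "\<Union>((\<lambda>x. {x}) ` {x. x < b}) \<in> J" using cl ideal_Union[OF J] by blast
  moreover have "\<Union>((\<lambda>x. {x}) ` {x. x < b}) = {\<xi>. \<xi> < b}" by auto
  ultimately show ?thesis by simp
qed

lemma empty_in: "ideal_on J \<Longrightarrow> {} \<in> J"
  unfolding ideal_on_def by blast

lemma succ_set_NS:
  assumes R: "regular_uncountable TYPE('k::wellorder)"
  shows "{\<xi>::'k. \<exists>\<alpha><\<xi>. \<xi> = succ \<alpha>} \<in> NS"
proof -
  let ?T = "{\<xi>::'k. \<exists>\<alpha><\<xi>. \<xi> = succ \<alpha>}"
  have "club (- ?T)" unfolding club_def
  proof (intro conjI allI impI)
    fix a :: 'k
    obtain u where "a < u" "is_limit u" using limits_unbounded[OF R] by blast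
    hence "u \<in> - ?T" using limit_not_succ by blast
    thus "\<exists>c\<in>- ?T. a \<le> c" using \<open>a < u\<close> by (meson less_imp_le)
  next
    fix a :: 'k assume "is_limit a \<and> (\<forall>b<a. \<exists>c\<in>- ?T. b < c \<and> c < a)"
    thus "a \<in> - ?T" using limit_not_succ by fastforce
  qed
  thus ?thesis unfolding NS_def stationary_def by blast
qed

lemma NS_sub:
  assumes R: "regular_uncountable TYPE('k::wellorder)" and J: "ideal_on J"
    and P: "pleasant J" and L: "L_set \<in> J"
  shows "NS \<subseteq> (J :: 'k set set)"
proof
  fix S :: "'k set" assume "S \<in> NS"
  then obtain C where C: "club C" "S \<inter> C = {}" unfolding NS_def stationary_def by blast
  have Cunb: "\<exists>c\<in>C. a \<le> c" for a using C(1) unfolding club_def by blast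
  have Ccl: "a \<in> C" if "is_limit a" "\<forall>b<a. \<exists>c\<in>C. b < c \<and> c < a" for a
    using C(1) that unfolding club_def by blast
  define D where "D = {d. is_limit d \<and> (\<forall>b<d. \<exists>c\<in>C. b < c \<and> c < d)}"
  have DC: "D \<subseteq> C" using Ccl unfolding D_def by blast
  have Dunb: "\<exists>d\<in>D. a < d" for a
  proof -
    define g where "g x = (SOME c. c \<in> C \<and> x < c)" for x
    have g: "g x \<in> C \<and> x < g x" for x
    proof -
      obtain c where "c \<in> C" "succ x \<le> c" using Cunb by blast
      hence "c \<in> C \<and> x < c" using succ_gt[OF R, of x] by simp
      thus ?thesis unfolding g_def by (rule someI)
    qed
    define f where "f n = (g ^^ Suc n) a" for n
    have inc: "f n < f (Suc n)" for n unfolding f_def using g by simp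
    have fC: "f n \<in> C" for n unfolding f_def using g by simp
    obtain u where u: "\<forall>n. f n < u" "is_limit u" "\<forall>b<u. \<exists>n. b < f n"
      using sup_seq[where f=f, OF R inc] by blast
    have "u \<in> D" unfolding D_def using u fC by blast
    moreover have "a < u" using u(1) g[of a] unfolding f_def by (metis funpow_0 funpow_simps_right(2) o_apply order.strict_trans)
    ultimately show ?thesis by blast
  qed
  obtain d0 where d0: "d0 \<in> D" using Dunb by blast
  define nxt where "nxt c = (LEAST d. d \<in> D \<and> c < d)" for c
  have nxt: "nxt c \<in> D \<and> c < nxt c" for c
  proof -
    obtain d where "d \<in> D \<and> c < d" using Dunb[of c] by blast
    hence "(LEAST d. d \<in> D \<and> c < d) \<in> D \<and> c < (LEAST d. d \<in> D \<and> c < d)" by (rule LeastI)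
    thus ?thesis unfolding nxt_def .
  qed
  define X where "X \<beta> = {\<xi>. \<exists>c\<in>D. succ c = \<beta> \<and> \<xi> < nxt c}" for \<beta>
  have XJ: "X \<beta> \<in> J" for \<beta>
  proof (cases "\<exists>c\<in>D. succ c = \<beta>")
    case True
    then obtain c where c: "c \<in> D" "succ c = \<beta>" by blast
    have "X \<beta> \<subseteq> {\<xi>. \<xi> < nxt c}" unfolding X_def using c succ_inj[OF R] by blast
    thus ?thesis using bounded_in[OF R J] ideal_sub[OF J] by blast
  next
    case False
    hence "X \<beta> = {}" unfolding X_def by blast
    thus ?thesis using empty_in[OF J] by simp
  qed
  have DJ: "diag_union L_set X \<in> J" using P L XJ unfolding pleasant_def by blast
  have B0: "{\<xi>. \<xi> < d0} \<in> J" by (rule bounded_in[OF R J])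
  have cover: "S \<subseteq> {\<xi>. \<xi> < d0} \<union> L_set \<union> diag_union L_set X"
  proof
    fix \<xi> assume xS: "\<xi> \<in> S"
    hence xC: "\<xi> \<notin> C" using C(2) by blast
    show "\<xi> \<in> {\<xi>. \<xi> < d0} \<union> L_set \<union> diag_union L_set X"
    proof (cases "\<exists>d\<in>D. d < \<xi>")
      case False
      hence "\<xi> \<le> d0" using d0 by (meson not_less)
      moreover have "\<xi> \<noteq> d0" using d0 DC xC by blast
      ultimately show ?thesis by (simp add: order.strict_iff_order)
    next
      case True
      then obtain d1 where d1: "d1 \<in> D" "d1 < \<xi>" by blast
      have "\<exists>c\<in>D. c < \<xi> \<and> (\<forall>d\<in>D. d < \<xi> \<longrightarrow> d \<le> c)"
      proof (rule ccontr)
        assume nc: "\<not> ?thesis"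
        define \<delta> where "\<delta> = (LEAST x. \<forall>d\<in>D. d < \<xi> \<longrightarrow> d \<le> x)"
        have dle: "\<forall>d\<in>D. d < \<xi> \<longrightarrow> d \<le> \<delta>" unfolding \<delta>_def
          by (rule LeastI[of _ \<xi>]) auto
        have dxi: "\<delta> \<le> \<xi>" unfolding \<delta>_def by (rule Least_le) auto
        have cof: "\<exists>d\<in>D. d < \<xi> \<and> b < d" if "b < \<delta>" for b
        proof -
          have "\<not> (\<forall>d\<in>D. d < \<xi> \<longrightarrow> d \<le> b)"
            using not_less_Least[OF that[unfolded \<delta>_def]] by blast
          thus ?thesis by (meson not_less)
        qed
        have dlt: "d < \<delta>" if "d \<in> D" "d < \<xi>" for d
        proof -
          have "d \<le> \<delta>" using dle that by blast
          moreover have "d \<noteq> \<delta>" using nc dle that by blast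
          ultimately show ?thesis by simp
        qed
        have lim: "is_limit \<delta>" unfolding is_limit_def
          using d1 dlt cof by blast
        have cofC: "\<forall>b<\<delta>. \<exists>c\<in>C. b < c \<and> c < \<delta>"
          using cof dlt DC by blast
        hence "\<delta> \<in> D" unfolding D_def using lim by blast
        moreover have "\<delta> \<in> C" using Ccl lim cofC by blast
        hence "\<delta> < \<xi>" using dxi xC by (metis order.not_eq_order_implies_strict)
        ultimately show False using nc dle by blast
      qed
      then obtain c where c: "c \<in> D" "c < \<xi>" "\<forall>d\<in>D. d < \<xi> \<longrightarrow> d \<le> c" by blast
      have cl: "is_limit c" using c(1) unfolding D_def by blast
      have sL: "succ c \<in> L_set" unfolding L_set_def using cl by blast
      have sle: "succ c \<le> \<xi>" using succ_le c(2) by blast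
      show ?thesis
      proof (cases "succ c = \<xi>")
        case True thus ?thesis using sL by simp
      next
        case False
        hence slt: "succ c < \<xi>" using sle by simp
        have "\<xi> < nxt c"
        proof (rule ccontr)
          assume "\<not> \<xi> < nxt c"
          hence "nxt c \<le> \<xi>" by simp
          moreover have "nxt c \<noteq> \<xi>" using nxt[of c] DC xC by blast
          ultimately have "nxt c < \<xi>" by simp
          thus False using c(3) nxt[of c] by (meson not_less)
        qed
        hence "\<xi> \<in> X (succ c)" unfolding X_def using c(1) by blast
        thus ?thesis unfolding diag_union_def using slt sL by blast
      qed
    qed
  qed
  have "{\<xi>. \<xi> < d0} \<union> L_set \<union> diag_union L_set X \<in> J"
    using B0 L DJ ideal_un[OF J] by blast
  thus "S \<in> J" using cover ideal_sub[OF J] by blast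
qed

lemma normal_of:
  assumes R: "regular_uncountable TYPE('k::wellorder)" and J: "ideal_on J"
    and P: "pleasant J" and N: "NS \<subseteq> (J :: 'k set set)"
  shows "normal_ideal J"
  unfolding normal_ideal_def
proof (intro allI impI)
  fix X :: "'k \<Rightarrow> 'k set" assume XJ: "\<forall>\<alpha>. X \<alpha> \<in> J"
  let ?T = "{\<xi>::'k. \<exists>\<alpha><\<xi>. \<xi> = succ \<alpha>}"
  have TJ: "?T \<in> J" using succ_set_NS[OF R] N by blast
  define X' where "X' \<beta> = \<Union>(X ` {\<alpha>. \<alpha> < \<beta>})" for \<beta>
  have X'J: "X' \<beta> \<in> J" for \<beta>
  proof -
    have "card_less {x. x < \<beta>} (UNIV::'k set)"
      using R unfolding regular_uncountable_def is_cardinal_type_def by blast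
    hence "card_less (X ` {\<alpha>. \<alpha> < \<beta>}) (UNIV::'k set)" by (rule card_less_image)
    moreover have "X ` {\<alpha>. \<alpha> < \<beta>} \<subseteq> J" using XJ by blast
    ultimately show ?thesis unfolding X'_def using ideal_Union[OF J] by blast
  qed
  have DJ: "diag_union ?T X' \<in> J" using P TJ X'J unfolding pleasant_def by blast
  have "diag_union UNIV X \<subseteq> diag_union ?T X' \<union> ?T"
  proof
    fix \<xi> assume "\<xi> \<in> diag_union UNIV X"
    then obtain \<alpha> where a: "\<alpha> < \<xi>" "\<xi> \<in> X \<alpha>" unfolding diag_union_def by blast
    have sle: "succ \<alpha> \<le> \<xi>" using succ_le a(1) by blast
    have sT: "succ \<alpha> \<in> ?T" using succ_gt[OF R, of \<alpha>] by blast
    show "\<xi> \<in> diag_union ?T X' \<union> ?T"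
    proof (cases "succ \<alpha> = \<xi>")
      case True thus ?thesis using sT by simp
    next
      case False
      hence "succ \<alpha> < \<xi>" using sle by simp
      moreover have "\<xi> \<in> X' (succ \<alpha>)" unfolding X'_def using a(2) succ_gt[OF R, of \<alpha>] by blast
      ultimately show ?thesis unfolding diag_union_def using sT by blast
    qed
  qed
  moreover have "diag_union ?T X' \<union> ?T \<in> J" using DJ TJ ideal_un[OF J] by blast
  ultimately show "diag_union UNIV X \<in> J" using ideal_sub[OF J] by blast
qed

theorem theorem3p7:
  fixes I :: "'k::wellorder set set"
  assumes "regular_uncountable TYPE('k)"
    and "ideal_on I"
    and "L_set \<in> I"
  shows "NS \<subseteq> pleasant_closure I \<and> normal_ideal (pleasant_closure I)"
proof
  have each: "NS \<subseteq> J" if "ideal_on J" "pleasant J" "I \<subseteq> J" for J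
    using NS_sub[OF assms(1) that(1,2)] assms(3) that(3) by blast
  show "NS \<subseteq> pleasant_closure I" unfolding pleasant_closure_def using each by blast
  show "normal_ideal (pleasant_closure I)" unfolding normal_ideal_def
  proof (intro allI impI)
    fix X :: "'k \<Rightarrow> 'k set" assume XP: "\<forall>\<alpha>. X \<alpha> \<in> pleasant_closure I"
    have "diag_union UNIV X \<in> J" if "ideal_on J" "pleasant J" "I \<subseteq> J" for J
    proof -
      have "normal_ideal J" using normal_of[OF assms(1) that(1,2) each[OF that]] .
      moreover have "\<forall>\<alpha>. X \<alpha> \<in> J" using XP that unfolding pleasant_closure_def by blast
      ultimately show ?thesis unfolding normal_ideal_def by blast
    qed
    thus "diag_union UNIV X \<in> pleasant_closure I" unfolding pleasant_closure_def by blast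
  qed
qed

end
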